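(* Let $d\ge1$ and $\alpha\in(1/2,1)$. Then there exist two absolutely continuous probability measures $\mu_1,\mu_2$ on $\mathbb R^d$ such that there is no convex set $C\subset\mathbb R^d$ with $\mu_1(C)=\mu_2(C)=\alpha$. *)

theory Defs
  imports "HOL-Probability.Probability"
begin

end

theory Submission
  imports Defs
begin

lemma lborel_refl: "distr lborel borel (\<lambda>x::'a::euclidean_space. - x) = lborel"
proof -
  show ?thesis using lborel_affine[of "-1::real" "0::'a"] by (simp add: density_1)
qed

lemma halfspace_borel: "{x::'a::euclidean_space. u \<bullet> x \<le> c} \<in> sets borel"
  by (simp add: borel_closed closed_halfspace_le)

lemma meas_refl:
  fixes S :: "'a::euclidean_space set"
  assumes "S \<in> sets borel"
  shows "measure lborel ((\<lambda>x. - x) -` S) = measure lborel S"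
proof -
  have "measure lborel S = measure (distr lborel borel (\<lambda>x::'a. - x)) S"
    by (simp add: lborel_refl)
  also have "\<dots> = measure lborel ((\<lambda>x. - x) -` S)"
    using assms by (subst measure_distr) auto
  finally show ?thesis by simp
qed

lemma half:
  fixes u :: "'a::euclidean_space"
  assumes "u \<noteq> 0"
  shows "measure lborel (cball 0 1 \<inter> {x. u \<bullet> x \<le> 0}) = measure lborel (cball (0::'a) 1) / 2"
proof -
  let ?B = "cball (0::'a) 1"
  let ?H = "?B \<inter> {x. u \<bullet> x \<le> 0}" and ?H' = "?B \<inter> {x. 0 \<le> u \<bullet> x}"
  have hb: "?H \<in> sets borel" using halfspace_borel by auto
  have "(\<lambda>x. - x) -` ?H = ?H'" by (auto simp: cball_def dist_norm)
  hence e1: "measure lborel ?H' = measure lborel ?H" using meas_refl[OF hb] by simp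
  have fm: "?H \<in> fmeasurable lborel" "?H' \<in> fmeasurable lborel"
  proof -
    have "emeasure lborel ?H \<le> emeasure lborel ?B" "emeasure lborel ?H' \<le> emeasure lborel ?B"
      by (auto intro!: emeasure_mono)
    then show "?H \<in> fmeasurable lborel" "?H' \<in> fmeasurable lborel"
      using emeasure_lborel_cball_finite[of "0::'a" 1]
      by (auto simp: fmeasurable_def halfspace_borel borel_closed closed_halfspace_ge)
  qed
  have un: "?H \<union> ?H' = ?B" by auto
  have "?H \<inter> ?H' \<subseteq> {x. u \<bullet> x = 0}" by auto
  moreover have "negligible {x::'a. u \<bullet> x = 0}" using negligible_hyperplane assms by blast
  ultimately have "negligible (?H \<inter> ?H')" using negligible_subset by blast
  hence "measure lebesgue (?H \<inter> ?H') = 0" by (rule negligible_imp_measure0)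
  moreover have "?H \<inter> ?H' \<in> sets lborel" using fm by auto
  ultimately have z: "measure lborel (?H \<inter> ?H') = 0" by simp
  have "measure lborel ?B = measure lborel ?H + measure lborel ?H' - measure lborel (?H \<inter> ?H')"
    using measure_Un3[OF fm] un by simp
  then show ?thesis using e1 z by simp
qed

lemma cball_pos: "0 < r \<Longrightarrow> emeasure lborel (cball (0::'a::euclidean_space) r) \<noteq> 0"
  "emeasure lborel (cball (0::'a::euclidean_space) r) \<noteq> \<infinity>"
  "0 < r \<Longrightarrow> 0 < measure lborel (cball (0::'a::euclidean_space) r)"
proof -
  show f: "emeasure lborel (cball (0::'a::euclidean_space) r) \<noteq> \<infinity>"
    using emeasure_lborel_cball_finite[of "0::'a" r] by auto
  assume r: "0 < r"
  show p: "0 < measure lborel (cball (0::'a::euclidean_space) r)"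
    using content_cball_pos[OF r, of 0] by simp
  show "emeasure lborel (cball (0::'a::euclidean_space) r) \<noteq> 0"
    using p f by (simp add: emeasure_eq_ennreal_measure)
qed

definition mu1 :: "'a::euclidean_space measure" where
  "mu1 = uniform_measure lborel (cball 0 1)"

lemma mu1_prob: "prob_space mu1"
  unfolding mu1_def by (rule prob_space_uniform_measure) (use cball_pos[of 1] in auto)

lemma mu1_half:
  assumes "(u::'a::euclidean_space) \<noteq> 0"
  shows "measure mu1 {x. u \<bullet> x \<le> 0} = 1/2"
proof -
  have "measure mu1 {x. u \<bullet> x \<le> 0} = measure lborel (cball 0 1 \<inter> {x. u \<bullet> x \<le> 0}) / measure lborel (cball (0::'a) 1)"
    unfolding mu1_def by (subst measure_uniform_measure) (use cball_pos[of 1] halfspace_borel in auto)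
  also have "\<dots> = 1/2" using half[OF assms] cball_pos(3)[of 1, where 'a='a] by simp
  finally show ?thesis .
qed

lemma uniform_r:
  fixes \<alpha> :: real
  assumes "1/2 < \<alpha>"
  shows "\<exists>r>0. \<forall>u::'a::euclidean_space. norm u = 1 \<longrightarrow> measure mu1 {x. u \<bullet> x \<le> r} < \<alpha>"
proof (rule ccontr)
  interpret P: prob_space "mu1 :: 'a measure" by (rule mu1_prob)
  have sets_mu1[simp]: "sets (mu1::'a measure) = sets borel" by (simp add: mu1_def)
  assume "\<not> ?thesis"
  hence "\<forall>n::nat. \<exists>u::'a. norm u = 1 \<and> \<alpha> \<le> measure mu1 {x. u \<bullet> x \<le> 1 / Suc n}"
    by (metis not_less of_nat_0_less_iff zero_less_Suc zero_less_divide_1_iff)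
  then obtain U :: "nat \<Rightarrow> 'a" where U: "\<And>n. norm (U n) = 1"
      "\<And>n. \<alpha> \<le> measure mu1 {x. U n \<bullet> x \<le> 1 / Suc n}" by metis
  have "U n \<in> sphere 0 1" for n using U by simp
  then obtain l \<phi> where l: "l \<in> sphere 0 1" "strict_mono \<phi>" "(U \<circ> \<phi>) \<longlonglongrightarrow> l"
    using compact_imp_seq_compact[OF compact_sphere, of 0 1] unfolding seq_compact_def by metis
  define A where "A n = {x. U (\<phi> n) \<bullet> x \<le> 1 / Suc (\<phi> n)}" for n
  define D where "D N = (\<Union>n\<in>{N..}. A n)" for N
  have Ameas: "A n \<in> sets mu1" for n unfolding A_def using halfspace_borel by simp
  have Dmeas: "D N \<in> sets mu1" for N unfolding D_def using Ameas by auto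
  have dec: "decseq D" unfolding D_def decseq_def by (auto, meson atLeast_iff order_trans)
  have "(\<lambda>N. measure mu1 (D N)) \<longlonglongrightarrow> measure mu1 (\<Inter>N. D N)"
    by (rule P.finite_Lim_measure_decseq) (use Dmeas dec in auto)
  moreover have "\<alpha> \<le> measure mu1 (D N)" for N
  proof -
    have "\<alpha> \<le> measure mu1 (A N)" using U(2)[of "\<phi> N"] by (simp add: A_def)
    also have "\<dots> \<le> measure mu1 (D N)"
      by (rule P.finite_measure_mono[OF _ Dmeas]) (auto simp: D_def)
    finally show ?thesis .
  qed
  ultimately have a1: "\<alpha> \<le> measure mu1 (\<Inter>N. D N)"
    by (intro LIMSEQ_le_const) auto
  have sub: "(\<Inter>N. D N) \<subseteq> {x. l \<bullet> x \<le> 0}"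
  proof
    fix x assume x: "x \<in> (\<Inter>N. D N)"
    show "x \<in> {x. l \<bullet> x \<le> 0}"
    proof (rule ccontr)
      assume "x \<notin> {x. l \<bullet> x \<le> 0}"
      hence pos: "0 < l \<bullet> x" by simp
      have t1: "(\<lambda>n. U (\<phi> n) \<bullet> x) \<longlonglongrightarrow> l \<bullet> x"
        using l(3) by (intro tendsto_inner) (auto simp: o_def)
      have t2: "(\<lambda>n. 1 / real (Suc (\<phi> n))) \<longlonglongrightarrow> 0"
        using LIMSEQ_subseq_LIMSEQ[OF LIMSEQ_Suc[OF lim_inverse_n'] l(2)] by (simp only: o_def)
      have "(\<lambda>n. U (\<phi> n) \<bullet> x - 1 / real (Suc (\<phi> n))) \<longlonglongrightarrow> l \<bullet> x - 0"
        by (intro tendsto_diff t1 t2)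
      hence "eventually (\<lambda>n. 0 < U (\<phi> n) \<bullet> x - 1 / real (Suc (\<phi> n))) sequentially"
        using pos by (intro order_tendstoD) auto
      then obtain N where N: "\<And>n. n \<ge> N \<Longrightarrow> 0 < U (\<phi> n) \<bullet> x - 1 / real (Suc (\<phi> n))"
        by (auto simp: eventually_sequentially)
      from x have "x \<in> D N" by auto
      then obtain n where "n \<ge> N" "x \<in> A n" by (auto simp: D_def)
      with N[of n] show False by (simp add: A_def)
    qed
  qed
  have "l \<noteq> 0" using l(1) by auto
  have "measure mu1 (\<Inter>N. D N) \<le> measure mu1 {x. l \<bullet> x \<le> 0}"
    by (rule P.finite_measure_mono[OF sub]) (simp add: halfspace_borel)
  also have "\<dots> = 1/2" using mu1_half[OF \<open>l \<noteq> 0\<close>] .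
  finally show False using a1 assms by simp
qed

lemma ac_uniform: "A \<in> sets borel \<Longrightarrow> absolutely_continuous lborel (uniform_measure lborel A)"
  unfolding uniform_measure_def by (rule absolutely_continuousI_density) simp

lemma completion_le:
  assumes "finite_measure M" "C \<in> sets (completion M)" "H \<in> sets M" "C \<subseteq> H"
  shows "measure (completion M) C \<le> measure M H"
proof -
  have "H \<in> fmeasurable (completion M)"
    using assms(1,3) finite_measure.emeasure_finite[OF assms(1), of H] by (auto simp: fmeasurable_def less_top)
  hence "measure (completion M) C \<le> measure (completion M) H"
    using measure_mono_fmeasurable[OF assms(4) assms(2)] by simp
  then show ?thesis using assms(3) by simp
qed

lemma completion_ge:
  assumes "finite_measure M" "C \<in> sets (completion M)" "H \<in> sets M" "H \<subseteq> C"
  shows "measure M H \<le> measure (completion M) C"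
proof -
  have "emeasure (completion M) C \<le> emeasure (completion M) (space (completion M))"
    by (rule emeasure_space)
  also have "\<dots> = emeasure M (space M)" by simp
  also have "\<dots> < \<top>" using finite_measure.emeasure_finite[OF assms(1), of "space M"]
    by (simp add: less_top)
  finally have "C \<in> fmeasurable (completion M)" using assms(2) by (simp add: fmeasurable_def)
  hence "measure (completion M) H \<le> measure (completion M) C"
    using measure_mono_fmeasurable[OF assms(4), of "completion M"] assms(3) by simp
  then show ?thesis using assms(3) by simp
qed

theorem mainTheorem7:
  fixes \<alpha> :: real
  assumes "1/2 < \<alpha>" and "\<alpha> < 1"
  shows "\<exists>\<mu>1 \<mu>2 :: (real ^ 'n) measure.
           prob_space \<mu>1 \<and> sets \<mu>1 = sets lborel \<and> absolutely_continuous lborel \<mu>1 \<and>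
           prob_space \<mu>2 \<and> sets \<mu>2 = sets lborel \<and> absolutely_continuous lborel \<mu>2 \<and>
           \<not> (\<exists>C :: (real ^ 'n) set. convex C \<and> C \<in> sets (completion \<mu>1) \<and> C \<in> sets (completion \<mu>2) \<and>
                 measure (completion \<mu>1) C = \<alpha> \<and> measure (completion \<mu>2) C = \<alpha>)"
proof -
  obtain r where r: "r > 0" "\<And>u::real^'n. norm u = 1 \<Longrightarrow> measure mu1 {x. u \<bullet> x \<le> r} < \<alpha>"
    using uniform_r[OF assms(1)] by blast
  define B where "B = cball (0::real^'n) (r/2)"
  define \<mu>2 where "\<mu>2 = uniform_measure lborel B"
  have Bpos: "emeasure lborel B \<noteq> 0" "emeasure lborel B \<noteq> \<infinity>"
    unfolding B_def using cball_pos[of "r/2"] r(1) by auto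
  have p2: "prob_space \<mu>2" unfolding \<mu>2_def by (rule prob_space_uniform_measure[OF Bpos])
  have p1: "prob_space (mu1::(real^'n) measure)" by (rule mu1_prob)
  have mB: "measure \<mu>2 B = 1"
    using emeasure_uniform_measure_1[OF Bpos] unfolding \<mu>2_def by (simp add: measure_def)
  have Bb: "B \<in> sets borel" unfolding B_def by simp
  show ?thesis
  proof (intro exI conjI)
    show "prob_space (mu1::(real^'n) measure)" by (rule p1)
    show "sets (mu1::(real^'n) measure) = sets lborel" by (simp add: mu1_def)
    show "absolutely_continuous lborel (mu1::(real^'n) measure)" unfolding mu1_def
      by (rule ac_uniform) simp
    show "prob_space \<mu>2" by (rule p2)
    show "sets \<mu>2 = sets lborel" by (simp add: \<mu>2_def)
    show "absolutely_continuous lborel \<mu>2" unfolding \<mu>2_def by (rule ac_uniform[OF Bb])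
    show "\<not> (\<exists>C :: (real ^ 'n) set. convex C \<and> C \<in> sets (completion mu1) \<and> C \<in> sets (completion \<mu>2) \<and>
                 measure (completion mu1) C = \<alpha> \<and> measure (completion \<mu>2) C = \<alpha>)"
    proof
      assume "\<exists>C :: (real ^ 'n) set. convex C \<and> C \<in> sets (completion mu1) \<and> C \<in> sets (completion \<mu>2) \<and>
                 measure (completion mu1) C = \<alpha> \<and> measure (completion \<mu>2) C = \<alpha>"
      then obtain C :: "(real^'n) set" where C: "convex C" "C \<in> sets (completion mu1)"
        "C \<in> sets (completion \<mu>2)" "measure (completion mu1) C = \<alpha>" "measure (completion \<mu>2) C = \<alpha>"
        by blast
      have "B \<subseteq> C"
      proof
        fix p assume pB: "p \<in> B"
        show "p \<in> C"
        proof (rule ccontr)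
          assume pC: "p \<notin> C"
          have cv: "convex ((\<lambda>x. x - p) ` C)" using C(1) by (rule convex_translation_subtract)
          have "0 \<notin> (\<lambda>x. x - p) ` C" using pC by auto
          then obtain a where a: "a \<noteq> 0" "\<forall>y\<in>(\<lambda>x. x - p) ` C. 0 \<le> a \<bullet> y"
            using separating_hyperplane_set_0[OF cv] by blast
          define u where "u = - (a /\<^sub>R norm a)"
          have nu: "norm u = 1" using a(1) by (simp add: u_def)
          have "norm p \<le> r/2" using pB by (simp add: B_def)
          moreover have "u \<bullet> p \<le> norm p" using norm_cauchy_schwarz[of u p] nu by simp
          ultimately have up: "u \<bullet> p \<le> r" using r(1) by linarith
          have "C \<subseteq> {x. u \<bullet> x \<le> r}"
          proof
            fix x assume "x \<in> C"
            hence "0 \<le> a \<bullet> (x - p)" using a(2) by auto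
            hence "u \<bullet> (x - p) \<le> 0" using a(1)
              by (simp add: u_def inner_diff_right divide_nonneg_pos)
            thus "x \<in> {x. u \<bullet> x \<le> r}" using up by (simp add: inner_diff_right)
          qed
          hence "measure (completion mu1) C \<le> measure mu1 {x. u \<bullet> x \<le> r}"
            using p1 C(2) by (intro completion_le) (auto simp: prob_space_def mu1_def halfspace_borel)
          with r(2)[OF nu] C(4) show False by simp
        qed
      qed
      hence "measure \<mu>2 B \<le> measure (completion \<mu>2) C"
        using p2 C(3) Bb
        by (intro completion_ge) (auto simp: \<mu>2_def prob_space_def)
      with mB C(5) assms(2) show False by simp
    qed
  qed
qed

end
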